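(* Let $n \geq 4$ be an integer and let $A \in \mathbb{C}^{n \times n}$ be a matrix whose entries are all bounded in absolute value by a real number $B > 1$. Let $C_A(X) = \det(X I_n - A) = \sum_{j=0}^{n} c_j X^j$ be the characteristic polynomial of $A$, and let $\|C_A\|_\infty = \max_{0 \le j \le n} |c_j|$. Then $$\log_2\left(\|C_A\|_\infty\right) \leq \frac{n}{2}\left(\log_2(n) + \log_2(B^2) + 0.21163175\right).$$ *)

theory Defs
  imports "Jordan_Normal_Form.Char_Poly"
begin

definition poly_inf_norm :: "complex poly \<Rightarrow> real" where
  "poly_inf_norm p = Max ((\<lambda>j. cmod (coeff p j)) ` {0..degree p})"

end

theory Submission
  imports Defs
begin


definition ip :: "nat \<Rightarrow> (nat \<Rightarrow> complex) \<Rightarrow> (nat \<Rightarrow> complex) \<Rightarrow> complex" where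
  "ip k u v = (\<Sum>t<k. u t * cnj (v t))"

definition nr :: "nat \<Rightarrow> (nat \<Rightarrow> complex) \<Rightarrow> real" where
  "nr k u = (\<Sum>t<k. (cmod (u t))^2)"

definition rw :: "complex mat \<Rightarrow> nat \<Rightarrow> nat \<Rightarrow> complex" where
  "rw W a = (\<lambda>t. W $$ (a,t))"

lemma ip_self: "ip k u u = of_real (nr k u)"
  unfolding ip_def nr_def unfolding of_real_sum by (intro sum.cong refl) (rule complex_norm_square[symmetric])

lemma ip_cnj: "ip k u v = cnj (ip k v u)"
  unfolding ip_def by (simp add: mult.commute)

lemma nr_nonneg: "nr k u \<ge> 0" unfolding nr_def by (intro sum_nonneg) auto

lemma nr_zero: assumes "nr k u = 0" shows "ip k v u = 0"
proof -
  have "\<forall>t\<in>{..<k}. (cmod (u t))^2 = 0"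
    using assms unfolding nr_def by (subst sum_nonneg_eq_0_iff[symmetric]) auto
  hence "\<And>t. t < k \<Longrightarrow> u t = 0" by auto
  thus ?thesis unfolding ip_def by (intro sum.neutral) auto
qed

lemma cnj_hom: "comm_ring_hom cnj"
  by unfold_locales auto

lemma det_orth:
  assumes W: "W \<in> carrier_mat k k"
    and orth: "\<And>a b. a < k \<Longrightarrow> b < k \<Longrightarrow> a \<noteq> b \<Longrightarrow> ip k (rw W a) (rw W b) = 0"
  shows "(cmod (det W))^2 = (\<Prod>a<k. nr k (rw W a))"
proof -
  interpret c: comm_ring_hom cnj by (rule cnj_hom)
  define W' where "W' = map_mat cnj (transpose_mat W)"
  have W': "W' \<in> carrier_mat k k" using W unfolding W'_def by auto
  have dW': "det W' = cnj (det W)" unfolding W'_def c.hom_det det_transpose[OF W] ..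
  define D where "D = mat k k (\<lambda>(a,b). ip k (rw W a) (rw W b))"
  have WW: "W * W' = D"
  proof (rule eq_matI)
    fix a b assume ab: "a < dim_row D" "b < dim_col D"
    thus "(W * W') $$ (a, b) = D $$ (a, b)"
      using W W' unfolding D_def W'_def
      by (auto simp: scalar_prod_def ip_def rw_def intro!: sum.cong)
  qed (use W W' D_def in auto)
  have "det D = prod_list (diag_mat D)"
    by (rule det_upper_triangular, auto simp: D_def upper_triangular_def orth)
  also have "\<dots> = (\<Prod>a<k. ip k (rw W a) (rw W a))"
    unfolding prod_list_diag_prod by (auto simp: D_def atLeast0LessThan intro!: prod.cong)
  also have "\<dots> = of_real (\<Prod>a<k. nr k (rw W a))" by (simp add: ip_self)
  finally have dD: "det D = of_real (\<Prod>a<k. nr k (rw W a))" .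
  have "det D = det W * cnj (det W)" unfolding WW[symmetric] det_mult[OF W W'] dW' ..
  also have "\<dots> = of_real ((cmod (det W))^2)" by (rule complex_norm_square[symmetric])
  finally show ?thesis using dD by (metis of_real_eq_iff)
qed

lemma ip_cong: "(\<And>t. t < k \<Longrightarrow> u t = u' t) \<Longrightarrow> (\<And>t. t < k \<Longrightarrow> v t = v' t) \<Longrightarrow> ip k u v = ip k u' v'"
  unfolding ip_def by (intro sum.cong) auto

lemma nr_cong: "(\<And>t. t < k \<Longrightarrow> u t = u' t) \<Longrightarrow> nr k u = nr k u'"
  unfolding nr_def by (intro sum.cong) auto

lemma ip_lin1: "ip k (\<lambda>t. u t + (\<Sum>i\<in>I. f i * w i t)) v = ip k u v + (\<Sum>i\<in>I. f i * ip k (w i) v)"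
  unfolding ip_def by (simp add: distrib_right sum.distrib sum_distrib_right sum_distrib_left mult.assoc sum.swap[of _ I])

lemma ip_lin2: "ip k u (\<lambda>t. v t + (\<Sum>i\<in>I. f i * w i t)) = ip k u v + (\<Sum>i\<in>I. cnj (f i) * ip k u (w i))"
  unfolding ip_def by (simp add: distrib_left sum.distrib sum_distrib_right sum_distrib_left mult.assoc mult.left_commute sum.swap[of _ I])

lemma gs_step:
  assumes W: "W \<in> carrier_mat k k" and l: "l < k"
    and orth: "\<And>a b. a < l \<Longrightarrow> b < l \<Longrightarrow> a \<noteq> b \<Longrightarrow> ip k (rw W a) (rw W b) = 0"
  shows "\<exists>W'\<in>carrier_mat k k. det W' = det W \<and> (\<forall>a<k. nr k (rw W' a) \<le> nr k (rw W a))
     \<and> (\<forall>a b. a < Suc l \<longrightarrow> b < Suc l \<longrightarrow> a \<noteq> b \<longrightarrow> ip k (rw W' a) (rw W' b) = 0)"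
proof -
  let ?w = "rw W"
  define c where "c = (\<lambda>i. - ip k (?w l) (?w i) / ip k (?w i) (?w i))"
  define E where "E = mat k k (\<lambda>(a,b). if a = b then 1 else if a = l \<and> b < l then c b else 0)"
  have E: "E \<in> carrier_mat k k" unfolding E_def by auto
  have dE: "det E = 1"
  proof -
    have "det E = prod_list (diag_mat E)"
      by (rule det_lower_triangular[OF _ E]) (auto simp: E_def)
    also have "\<dots> = 1" unfolding prod_list_diag_prod using E by (auto simp: E_def intro!: prod.neutral)
    finally show ?thesis .
  qed
  define W' where "W' = E * W"
  have W': "W' \<in> carrier_mat k k" unfolding W'_def using E W by auto
  have dW': "det W' = det W" unfolding W'_def det_mult[OF E W] dE by simp
  define r where "r = (\<lambda>t. ?w l t + (\<Sum>i<l. c i * ?w i t))"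
  have ent: "W' $$ (a,t) = (if a = l then r t else ?w a t)" if a: "a < k" and t: "t < k" for a t
  proof -
    have "W' $$ (a,t) = (\<Sum>s<k. E $$ (a,s) * W $$ (s,t))"
      unfolding W'_def using E W a t by (simp add: scalar_prod_def atLeast0LessThan)
    also have "\<dots> = (\<Sum>s<k. (if s = a then W $$ (a,t) else 0) + (if a = l \<and> s < l then c s * W $$ (s,t) else 0))"
      by (intro sum.cong refl) (use a in \<open>auto simp: E_def\<close>)
    also have "\<dots> = W $$ (a,t) + (if a = l then (\<Sum>s<l. c s * W $$ (s,t)) else 0)"
    proof -
      have "(\<Sum>s<k. (if a = l \<and> s < l then c s * W $$ (s,t) else 0)) = (if a = l then (\<Sum>s<l. c s * W $$ (s,t)) else 0)"
      proof (cases "a = l")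
        case True
        have "(\<Sum>s<k. (if s < l then c s * W $$ (s,t) else 0)) = (\<Sum>s\<in>{s\<in>{..<k}. s < l}. c s * W $$ (s,t))"
          by (rule sum.inter_filter[symmetric]) simp
        also have "{s\<in>{..<k}. s < l} = {..<l}" using l by auto
        finally show ?thesis using True by simp
      qed simp
      thus ?thesis using a by (simp add: sum.distrib)
    qed
    finally show ?thesis unfolding r_def rw_def by auto
  qed
  have rowW': "ip k (rw W' a) v = ip k (if a = l then r else ?w a) v"
              "ip k v (rw W' a) = ip k v (if a = l then r else ?w a)"
              "nr k (rw W' a) = nr k (if a = l then r else ?w a)" if a: "a < k" for a v
    using ent[OF a] by (auto simp: rw_def intro!: ip_cong nr_cong)
  have ipd: "ip k (?w i) (?w b) = (if i = b then ip k (?w b) (?w b) else 0)" if "i < l" "b < l" for i b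
    using orth that by auto
  have rorth: "ip k r (?w b) = 0" if b: "b < l" for b
  proof -
    have "ip k r (?w b) = ip k (?w l) (?w b) + (\<Sum>i<l. c i * ip k (?w i) (?w b))"
      unfolding r_def by (rule ip_lin1)
    also have "(\<Sum>i<l. c i * ip k (?w i) (?w b)) = (\<Sum>i<l. if i = b then c b * ip k (?w b) (?w b) else 0)"
    proof (rule sum.cong[OF refl])
      fix i assume "i \<in> {..<l}"
      hence il: "i < l" by simp
      show "c i * ip k (?w i) (?w b) = (if i = b then c b * ip k (?w b) (?w b) else 0)"
        using orth[OF il b] by (cases "i = b") auto
    qed
    also have "\<dots> = c b * ip k (?w b) (?w b)"
      using b by (simp only: sum.delta finite_lessThan lessThan_iff if_True)
    also have "ip k (?w l) (?w b) + c b * ip k (?w b) (?w b) = 0"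
    proof (cases "ip k (?w b) (?w b) = 0")
      case True
      hence "nr k (?w b) = 0" unfolding ip_self by simp
      from nr_zero[OF this] True show ?thesis by simp
    next
      case False
      thus ?thesis unfolding c_def by simp
    qed
    finally show ?thesis .
  qed
  have rnorm: "nr k r \<le> nr k (?w l)"
  proof -
    have "ip k r r = ip k r (?w l) + (\<Sum>i<l. cnj (c i) * ip k r (?w i))"
      by (subst (2) r_def) (rule ip_lin2)
    also have "(\<Sum>i<l. cnj (c i) * ip k r (?w i)) = 0" by (simp add: rorth)
    also have "ip k r (?w l) = ip k (?w l) (?w l) + (\<Sum>i<l. c i * ip k (?w i) (?w l))"
      unfolding r_def by (rule ip_lin1)
    also have "(\<Sum>i<l. c i * ip k (?w i) (?w l)) = of_real (- (\<Sum>i<l. (cmod (ip k (?w l) (?w i)))^2 / nr k (?w i)))"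
      unfolding of_real_sum of_real_minus sum_negf[symmetric]
    proof (intro sum.cong refl)
      fix i
      have "c i * ip k (?w i) (?w l) = - (ip k (?w l) (?w i) * cnj (ip k (?w l) (?w i))) / ip k (?w i) (?w i)"
        unfolding c_def by (subst (2) ip_cnj) simp
      also have "\<dots> = - of_real ((cmod (ip k (?w l) (?w i)))^2) / of_real (nr k (?w i))"
        unfolding ip_self complex_norm_square ..
      finally show "c i * ip k (?w i) (?w l) = - of_real ((cmod (ip k (?w l) (?w i)))\<^sup>2 / nr k (?w i))"
        by simp
    qed
    finally have "of_real (nr k r) = (of_real (nr k (?w l) - (\<Sum>i<l. (cmod (ip k (?w l) (?w i)))^2 / nr k (?w i))) :: complex)"
      unfolding ip_self by simp
    hence "nr k r = nr k (?w l) - (\<Sum>i<l. (cmod (ip k (?w l) (?w i)))^2 / nr k (?w i))"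
      using of_real_eq_iff by blast
    moreover have "(\<Sum>i<l. (cmod (ip k (?w l) (?w i)))^2 / nr k (?w i)) \<ge> 0"
      by (intro sum_nonneg divide_nonneg_nonneg nr_nonneg) auto
    ultimately show ?thesis by linarith
  qed
  show ?thesis
  proof (intro bexI[OF _ W'] conjI allI impI)
    show "det W' = det W" by fact
    fix a assume a: "a < k"
    show "nr k (rw W' a) \<le> nr k (rw W a)" using rowW'(3)[OF a] rnorm by auto
  next
    fix a b assume ab: "a < Suc l" "b < Suc l" "a \<noteq> b"
    hence a: "a < k" and b: "b < k" using l by auto
    show "ip k (rw W' a) (rw W' b) = 0"
    proof (cases "a = l")
      case True
      with ab have "b < l" by auto
      thus ?thesis using rowW'(1)[OF a] rowW'(2)[OF b] True rorth by auto
    next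
      case False
      note aF = False
      show ?thesis
      proof (cases "b = l")
        case True
        with ab aF have "a < l" by auto
        thus ?thesis using rowW'(1)[OF a] rowW'(2)[OF b] True rorth aF
          by (auto simp: ip_cnj[of k "?w a"])
      next
        case False
        with ab aF have "a < l" "b < l" by auto
        thus ?thesis using rowW'(1)[OF a] rowW'(2)[OF b] False aF orth ab by auto
      qed
    qed
  qed
qed

lemma gs_all:
  assumes W: "W \<in> carrier_mat k k"
  shows "l \<le> k \<Longrightarrow> \<exists>W'\<in>carrier_mat k k. det W' = det W \<and> (\<forall>a<k. nr k (rw W' a) \<le> nr k (rw W a))
     \<and> (\<forall>a b. a < l \<longrightarrow> b < l \<longrightarrow> a \<noteq> b \<longrightarrow> ip k (rw W' a) (rw W' b) = 0)"
proof (induction l)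
  case 0
  show ?case using W by auto
next
  case (Suc l)
  then obtain W1 where W1: "W1 \<in> carrier_mat k k" "det W1 = det W" "\<forall>a<k. nr k (rw W1 a) \<le> nr k (rw W a)"
    "\<forall>a b. a < l \<longrightarrow> b < l \<longrightarrow> a \<noteq> b \<longrightarrow> ip k (rw W1 a) (rw W1 b) = 0" by auto
  from gs_step[OF W1(1), of l] Suc.prems W1(4)
  obtain W2 where W2: "W2 \<in> carrier_mat k k" "det W2 = det W1" "\<forall>a<k. nr k (rw W2 a) \<le> nr k (rw W1 a)"
    "\<forall>a b. a < Suc l \<longrightarrow> b < Suc l \<longrightarrow> a \<noteq> b \<longrightarrow> ip k (rw W2 a) (rw W2 b) = 0" by auto
  show ?case using W1 W2 by (intro bexI[OF _ W2(1)]) (auto intro: order_trans)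
qed

lemma hadamard:
  assumes W: "W \<in> carrier_mat k k"
  shows "(cmod (det W))^2 \<le> (\<Prod>a<k. nr k (rw W a))"
proof -
  from gs_all[OF W order_refl] obtain W' where W': "W' \<in> carrier_mat k k" "det W' = det W"
    "\<forall>a<k. nr k (rw W' a) \<le> nr k (rw W a)"
    "\<forall>a b. a < k \<longrightarrow> b < k \<longrightarrow> a \<noteq> b \<longrightarrow> ip k (rw W' a) (rw W' b) = 0" by auto
  have "(cmod (det W))^2 = (\<Prod>a<k. nr k (rw W' a))"
    using det_orth[OF W'(1)] W'(2,4) by auto
  also have "\<dots> \<le> (\<Prod>a<k. nr k (rw W a))"
    by (intro prod_mono conjI nr_nonneg) (use W'(3) in auto)
  finally show ?thesis .
qed

lemma det_bound:
  assumes W: "W \<in> carrier_mat k k" and B: "B \<ge> 0"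
    and ent: "\<And>i j. i < k \<Longrightarrow> j < k \<Longrightarrow> cmod (W $$ (i,j)) \<le> B"
  shows "cmod (det W) \<le> sqrt (real k ^ k) * B ^ k"
proof -
  have "nr k (rw W a) \<le> real k * B^2" if a: "a < k" for a
  proof -
    have "nr k (rw W a) \<le> (\<Sum>t<k. B^2)" unfolding nr_def rw_def
      by (intro sum_mono power_mono ent a) auto
    thus ?thesis by simp
  qed
  hence "(\<Prod>a<k. nr k (rw W a)) \<le> (\<Prod>a<k. real k * B^2)"
    by (intro prod_mono conjI nr_nonneg) auto
  with hadamard[OF W] have "(cmod (det W))^2 \<le> (real k * B^2)^k" by simp
  also have "\<dots> = (sqrt (real k ^ k) * B ^ k)^2"
    by (simp add: power_mult_distrib power_mult[symmetric] mult.commute)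
  finally show ?thesis
    by (rule power2_le_imp_le) (use B in auto)
qed

lemma coeff_char_poly_bound:
  assumes B: "B \<ge> 0"
  shows "\<And>M m. M \<in> carrier_mat m m \<Longrightarrow> (\<And>i j. i < m \<Longrightarrow> j < m \<Longrightarrow> cmod (M $$ (i,j)) \<le> B) \<Longrightarrow>
    cmod (coeff (char_poly M) j) \<le> real (m choose j) * sqrt (real (m - j) ^ (m - j)) * B ^ (m - j)"
proof (induction j)
  case (0 M m)
  define X where "X = - char_matrix M 0"
  have X: "X \<in> carrier_mat m m" using 0 unfolding X_def by auto
  have "coeff (char_poly M) 0 = det X" unfolding X_def
    by (simp add: poly_0_coeff_0[symmetric] char_poly_matrix[OF 0(1)])
  also have "cmod (det X) \<le> sqrt (real m ^ m) * B ^ m"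
    by (rule det_bound[OF X B]) (use 0 in \<open>auto simp: X_def char_matrix_def\<close>)
  finally show ?case by simp
next
  case (Suc j M m)
  let ?b = "real ((m - 1) choose j) * sqrt (real (m - 1 - j) ^ (m - 1 - j)) * B ^ (m - 1 - j)"
  have "of_nat (Suc j) * coeff (char_poly M) (Suc j) = coeff (pderiv (char_poly M)) j"
    by (simp add: coeff_pderiv)
  also have "\<dots> = (\<Sum>i<m. coeff (char_poly (mat_delete M i i)) j)"
    unfolding pderiv_char_poly[OF Suc.prems(1)] coeff_sum ..
  finally have eq: "of_nat (Suc j) * coeff (char_poly M) (Suc j) = (\<Sum>i<m. coeff (char_poly (mat_delete M i i)) j)" .
  have "cmod (\<Sum>i<m. coeff (char_poly (mat_delete M i i)) j) \<le> (\<Sum>i<m. cmod (coeff (char_poly (mat_delete M i i)) j))"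
    by (rule norm_sum)
  also have "\<dots> \<le> (\<Sum>i<m. ?b)"
  proof (intro sum_mono)
    fix i assume i: "i \<in> {..<m}"
    have Mi: "mat_delete M i i \<in> carrier_mat (m - 1) (m - 1)" using mat_delete_carrier[OF Suc.prems(1)] .
    show "cmod (coeff (char_poly (mat_delete M i i)) j) \<le> ?b"
    proof (rule Suc.IH[OF Mi])
      fix a b assume "a < m - 1" "b < m - 1"
      thus "cmod (mat_delete M i i $$ (a, b)) \<le> B"
        using Suc.prems by (auto simp: mat_delete_def)
    qed
  qed
  also have "\<dots> = real m * ?b" by simp
  also have "real m * ?b = real (Suc j) * (real (m choose Suc j) * sqrt (real (m - Suc j) ^ (m - Suc j)) * B ^ (m - Suc j))"
  proof -
    have "real m * real ((m - 1) choose j) = real (Suc j) * real (m choose Suc j)"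
      using binomial_absorption[of j m] by (metis of_nat_mult)
    moreover have "m - 1 - j = m - Suc j" by simp
    ultimately show ?thesis by (simp add: mult.assoc[symmetric])
  qed
  finally have "real (Suc j) * cmod (coeff (char_poly M) (Suc j)) \<le> real (Suc j) * (real (m choose Suc j) * sqrt (real (m - Suc j) ^ (m - Suc j)) * B ^ (m - Suc j))"
    using eq by (metis norm_mult norm_of_nat)
  thus ?case by (rule mult_left_le_imp_le) simp
qed



lemma exp_ge_partial:
  fixes x :: real assumes x: "x \<ge> 0"
  shows "(\<Sum>i<N. x^i / fact i) \<le> exp x"
proof -
  have s: "(\<lambda>n. x^n / fact n) sums exp x" using exp_converges[of x] by (simp add: divide_inverse mult.commute)
  have "(\<Sum>i<N. x^i / fact i) \<le> suminf (\<lambda>n. x^n / fact n)"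
    by (rule sum_le_suminf) (use s x in \<open>auto simp: sums_iff\<close>)
  thus ?thesis using s by (simp add: sums_iff)
qed

lemma exp_ge_term:
  fixes x :: real assumes x: "x \<ge> 0"
  shows "x^m / fact m \<le> exp x"
proof -
  have "x^m / fact m \<le> (\<Sum>i<Suc m. x^i / fact i)"
    by (rule member_le_sum) (use x in auto)
  also have "\<dots> \<le> exp x" by (rule exp_ge_partial[OF x])
  finally show ?thesis .
qed

lemma ln2_ge: "(6931471 / 10^7 :: real) \<le> ln 2"
proof -
  define f where "f = (\<lambda>n. (1/2::real)^Suc n / real (n+1))"
  have sm: "summable f" unfolding f_def
  proof (rule summable_comparison_test[OF _ summable_geometric[of "1/2::real"]])
    show "\<exists>N. \<forall>n\<ge>N. norm ((1/2::real)^Suc n / real (n+1)) \<le> (1/2)^n"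
    proof (intro exI[of _ 0] allI impI)
      fix n :: nat
      have "(1/2::real)^Suc n / real (n+1) \<le> (1/2)^Suc n / 1" by (intro divide_left_mono) auto
      also have "\<dots> \<le> (1/2)^n" by simp
      finally show "norm ((1/2::real)^Suc n / real (n+1)) \<le> (1/2)^n" by simp
    qed
  qed simp
  have "ln (1/2::real) = (\<Sum>n. (- 1) ^ n * (1 / real (n + 1)) * (1/2 - 1) ^ Suc n)"
    by (rule ln_series) auto
  also have "(\<lambda>n. (- 1) ^ n * (1 / real (n + 1)) * ((1::real)/2 - 1) ^ Suc n) = (\<lambda>n. - f n)"
    unfolding f_def by (rule ext) (simp add: power_minus' field_simps)
  also have "(\<Sum>n. - f n) = - (\<Sum>n. f n)" by (rule suminf_minus[OF sm])
  finally have l: "ln 2 = (\<Sum>n. f n)"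
    by (simp add: ln_div)
  have "(\<Sum>n<22. f n) \<le> ln 2"
    unfolding l by (rule sum_le_suminf[OF sm]) (auto simp: f_def)
  moreover have "(6931471 / 10^7 :: real) \<le> (\<Sum>n<22. f n)"
    by (simp add: lessThan_nat_numeral f_def power_divide)
  ultimately show ?thesis by linarith
qed

definition lam :: real where "lam = 2 powr (21163175 / 100000000)"

lemma lam_ge: "(231599437 / 200000000 :: real) \<le> lam"
proof -
  define d :: real where "d = 21163175 / 100000000 - 1/5"
  have lam: "lam = 2 powr (1/5) * 2 powr d" unfolding lam_def d_def by (simp add: powr_add[symmetric])
  define r1 :: real where "r1 = 11486983549 / 10^10"
  have r1: "r1 \<le> 2 powr (1/5)"
  proof (rule ccontr)
    assume "\<not> r1 \<le> 2 powr (1/5)"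
    hence "(2 powr (1/5))^5 < r1^5" by (intro power_strict_mono) auto
    moreover have "(2 powr (1/5::real))^5 = 2" by (simp add: powr_realpow[symmetric] powr_powr)
    ultimately show False unfolding r1_def by (simp add: power_divide)
  qed
  define L :: real where "L = 6931471 / 10^7"
  define y where "y = d * L"
  have y0: "0 \<le> y" unfolding y_def d_def L_def by simp
  have "1 + y + y^2/2 + y^3/6 \<le> 1 + d * ln 2 + (d * ln 2)^2/2 + (d * ln 2)^3/6"
  proof -
    have "y \<le> d * ln 2" unfolding y_def using ln2_ge unfolding L_def d_def by (intro mult_left_mono) auto
    with y0 show ?thesis by (intro add_mono power_mono divide_right_mono) auto
  qed
  also have "\<dots> = (\<Sum>i<4. (d * ln 2)^i / fact i)" by (simp add: lessThan_nat_numeral fact_numeral)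
  also have "\<dots> \<le> exp (d * ln 2)" by (rule exp_ge_partial) (use y0 ln2_ge in \<open>auto simp: d_def\<close>)
  also have "\<dots> = 2 powr d" by (simp add: powr_def mult.commute)
  finally have t: "1 + y + y^2/2 + y^3/6 \<le> 2 powr d" .
  have "(231599437 / 200000000 :: real) \<le> r1 * (1 + y + y^2/2 + y^3/6)"
    unfolding r1_def y_def d_def L_def by (simp add: power_divide)
  also have "\<dots> \<le> 2 powr (1/5) * 2 powr d"
    by (intro mult_mono r1 t) (use y0 in \<open>auto simp: r1_def\<close>)
  finally show ?thesis unfolding lam .
qed

lemma lam_ge': "(22/19::real) \<le> lam" using lam_ge by simp

lemma lam_pos: "lam > 0" unfolding lam_def by simp

lemma ln_lam: "1/7 \<le> ln lam"
proof -
  have "1 + (- 1/28) \<le> exp (- 1/28 :: real)" by (rule exp_ge_add_one_self)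
  hence e1: "exp (1/28 :: real) \<le> 28/27"
    by (simp add: exp_minus field_simps)
  have "exp (1/7 :: real) = exp (1/28) ^ 4" using exp_of_nat_mult[of 4 "1/28::real"] by simp
  also have "\<dots> \<le> (28/27)^4" by (intro power_mono e1) simp
  also have "\<dots> \<le> (22/19::real)" by (simp add: power_divide)
  also have "\<dots> \<le> lam" by (rule lam_ge')
  finally have "exp (1/7) \<le> lam" .
  hence "ln (exp (1/7)) \<le> ln lam" using lam_pos by (subst ln_le_cancel_iff) auto
  thus ?thesis by simp
qed

lemma entropy_nat:
  assumes "k \<le> n"
  shows "(n choose k) * k^k * (n-k)^(n-k) \<le> (n::nat)^n"
proof -
  have "(n::nat)^n = (k + (n-k))^n" using assms by simp
  also have "\<dots> = (\<Sum>i\<le>n. (n choose i) * k^i * (n-k)^(n-i))" by (subst binomial_ring) simp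
  finally have eq: "n^n = (\<Sum>i\<le>n. (n choose i) * k^i * (n-k)^(n-i))" .
  have "(n choose k) * k^k * (n-k)^(n-k) \<le> (\<Sum>i\<le>n. (n choose i) * k^i * (n-k)^(n-i))"
    by (rule member_le_sum[of k]) (use assms in auto)
  thus ?thesis using eq by simp
qed

definition G :: "nat \<Rightarrow> nat \<Rightarrow> bool" where
  "G n k \<longleftrightarrow> real (n choose k)^2 * real k ^ k \<le> real n ^ n * lam ^ n"

lemma G_big:
  assumes m7: "7 \<le> n - k" and kn: "k \<le> n"
  shows "G n k"
proof -
  define m where "m = n - k"
  define C where "C = real (n choose k)"
  have m7': "7 \<le> m" using m7 unfolding m_def .
  have C0: "C \<ge> 0" unfolding C_def by simp
  have e: "C * real k^k * real m^m \<le> real n^n"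
  proof -
    have "real ((n choose k) * k^k * (n-k)^(n-k)) \<le> real (n^n)" using entropy_nat[OF kn] by (simp only: of_nat_le_iff)
    thus ?thesis unfolding C_def m_def by (simp only: of_nat_mult of_nat_power)
  qed
  have Cm: "n choose k = n choose m" unfolding m_def using kn by (rule binomial_symmetric)
  have c1: "C * fact m \<le> real n^m"
  proof -
    have "real ((n choose m) * fact m) \<le> real (n^m)" using binomial_fact_pow[of n m] by (simp only: of_nat_le_iff)
    thus ?thesis unfolding C_def Cm by (simp only: of_nat_mult of_nat_power of_nat_fact)
  qed
  have ll: "0 \<le> ln lam" using ln_lam by linarith
  have c2: "(real n * ln lam)^m / fact m \<le> lam^n"
  proof -
    have "(real n * ln lam)^m / fact m \<le> exp (real n * ln lam)" by (rule exp_ge_term) (use ll in auto)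
    also have "\<dots> = lam^n" using lam_pos by (simp add: exp_of_nat_mult)
    finally show ?thesis .
  qed
  have c3: "real n^m \<le> real m^m * (real n * ln lam)^m"
  proof -
    have "real n \<le> real m * (real n * ln lam)"
    proof -
      have m7r: "7 \<le> real m" using m7' by simp
      have "7 * (1/7) \<le> real m * ln lam" by (rule mult_mono[OF m7r ln_lam]) (use ll in auto)
      hence "1 \<le> real m * ln lam" by simp
      hence "real n * 1 \<le> real n * (real m * ln lam)" by (intro mult_left_mono) auto
      thus ?thesis by (simp add: ac_simps)
    qed
    hence "real n^m \<le> (real m * (real n * ln lam))^m" by (intro power_mono) auto
    thus ?thesis by (simp add: power_mult_distrib)
  qed
  have "C \<le> real m^m * lam^n"
  proof -
    have "C * fact m \<le> real m^m * (real n * ln lam)^m" using c1 c3 by linarith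
    hence "C \<le> (real m^m * (real n * ln lam)^m) / fact m" by (simp add: pos_le_divide_eq)
    also have "\<dots> = real m^m * ((real n * ln lam)^m / fact m)" by simp
    also have "\<dots> \<le> real m^m * lam^n" by (intro mult_left_mono c2) auto
    finally show ?thesis .
  qed
  have "C^2 * real k^k * real m^m = C * (C * real k^k * real m^m)" by (simp add: power2_eq_square)
  also have "\<dots> \<le> C * real n^n" by (intro mult_left_mono e C0)
  also have "\<dots> \<le> (real m^m * lam^n) * real n^n" by (intro mult_right_mono \<open>C \<le> _\<close>) auto
  finally have "(C^2 * real k^k) * real m^m \<le> (real n^n * lam^n) * real m^m" by (simp add: ac_simps)
  moreover have "real m^m > 0" using m7' by simp
  ultimately have "C^2 * real k^k \<le> real n^n * lam^n" by (rule mult_right_le_imp_le)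
  thus ?thesis unfolding G_def C_def .
qed

lemma E_step:
  assumes j: "j \<ge> 1"
  shows "(real j + 1)^(2*j+1) \<le> real j^j * (real j + 2)^(j+1)"
proof -
  define a where "a = real j + 1"
  have a0: "a > 0" unfolding a_def by simp
  have B0: "1 + real (j+1) * (- 1 / a^2) \<le> (1 + (- 1 / a^2))^(j+1)"
    by (rule Bernoulli_inequality) (use j in \<open>auto simp: a_def field_simps\<close>)
  have eq1: "1 + real (j+1) * (- 1 / a^2) = real j / a"
  proof -
    have ja: "real (j+1) = a" "real j = a - 1" unfolding a_def by simp_all
    show ?thesis unfolding ja using a0 by (simp add: field_simps power2_eq_square)
  qed
  have eq2: "1 + (- 1 / a^2) = (real j * (real j + 2)) / a^2"
  proof -
    have a2: "a^2 - 1 = real j * (real j + 2)" unfolding a_def by (simp add: power2_eq_square algebra_simps)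
    have "1 + (- 1 / a^2) = (a^2 - 1) / a^2" using a0 by (simp add: field_simps)
    thus ?thesis unfolding a2 .
  qed
  have "real j / a \<le> ((real j * (real j + 2)) / a^2)^(j+1)" using B0 unfolding eq1 eq2 .
  also have "\<dots> = (real j * (real j + 2))^(j+1) / a^(2*(j+1))" unfolding power_divide power_mult ..
  finally have "real j / a \<le> (real j * (real j + 2))^(j+1) / a^(2*(j+1))" .
  hence h1: "real j / a * a^(2*(j+1)) \<le> (real j * (real j + 2))^(j+1)"
    using a0 by (simp add: field_simps)
  have p: "a^(2*(j+1)) = a * a^(2*j+1)"
  proof -
    have "2*(j+1) = Suc (2*j+1)" by simp
    thus ?thesis by (simp only: power_Suc)
  qed
  have "real j / a * a^(2*(j+1)) = real j * a^(2*j+1)" unfolding p using a0 by simp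
  with h1 have "real j * a^(2*j+1) \<le> (real j * (real j + 2))^(j+1)" by simp
  also have "\<dots> = real j * (real j^j * (real j + 2)^(j+1))" by (simp add: power_mult_distrib)
  finally have "real j * a^(2*j+1) \<le> real j * (real j^j * (real j + 2)^(j+1))" .
  thus ?thesis unfolding a_def using j by (simp add: mult_le_cancel_left)
qed

lemma E_mono:
  assumes k: "1 \<le> k"
  shows "k \<le> n \<Longrightarrow> (real k + 1)^k * real n^n \<le> (real n + 1)^n * real k^k"
proof (induction n rule: dec_induct)
  case base show ?case by (simp add: mult.commute)
next
  case (step n)
  have n1: "n \<ge> 1" using step k by simp
  have IH: "(real k + 1)^k * real n^n \<le> (real n + 1)^n * real k^k" by fact
  have S: "(real n + 1)^(2*n+1) \<le> real n^n * (real n + 2)^(n+1)" by (rule E_step[OF n1])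
  have pw: "(real n + 1)^n * (real n + 1)^(n+1) = (real n + 1)^(2*n+1)"
    unfolding power_add[symmetric] by (rule arg_cong[where f="\<lambda>e. (real n + 1)^e"]) simp
  have "((real k + 1)^k * real (Suc n)^(Suc n)) * real n^n = ((real k + 1)^k * real n^n) * (real n + 1)^(n+1)"
    by (simp add: ac_simps)
  also have "\<dots> \<le> ((real n + 1)^n * real k^k) * (real n + 1)^(n+1)" by (intro mult_right_mono IH) auto
  also have "\<dots> = (real n + 1)^(2*n+1) * real k^k" using pw by (simp add: ac_simps)
  also have "\<dots> \<le> (real n^n * (real n + 2)^(n+1)) * real k^k" by (intro mult_right_mono S) auto
  also have "\<dots> = ((real (Suc n) + 1)^(Suc n) * real k^k) * real n^n" by (simp add: ac_simps)
  finally show ?case using n1 by (simp add: mult_le_cancel_right)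
qed

lemma lam_ge1: "1 \<le> lam" using lam_ge' by simp

lemma G_step:
  assumes k1: "1 \<le> k" and kn: "k \<le> n" and cond: "real n + 1 \<le> lam * (real k + 1)" and IH: "G n k"
  shows "G (Suc n) (Suc k)"
proof -
  define C where "C = real (n choose k)"
  define C' where "C' = real (Suc n choose Suc k)"
  have rel: "C' * (real k + 1) = (real n + 1) * C"
  proof -
    have "real (Suc n * (n choose k)) = real ((Suc n choose Suc k) * Suc k)" by (subst Suc_times_binomial_eq) simp
    thus ?thesis unfolding C_def C'_def by (simp add: algebra_simps)
  qed
  have IH': "C^2 * real k^k \<le> real n^n * lam^n" using IH unfolding G_def C_def .
  have EM: "(real k + 1)^k * real n^n \<le> (real n + 1)^n * real k^k" by (rule E_mono[OF k1 kn])
  have lp: "lam > 0" by (rule lam_pos)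
  have "(C'^2 * (real k + 1)^(Suc k)) * ((real k + 1) * real k^k) = (C' * (real k + 1))^2 * (real k + 1)^k * real k^k"
    by (simp add: power2_eq_square ac_simps)
  also have "\<dots> = (real n + 1)^2 * (C^2 * real k^k) * (real k + 1)^k" unfolding rel by (simp add: power_mult_distrib ac_simps)
  also have "\<dots> \<le> (real n + 1)^2 * (real n^n * lam^n) * (real k + 1)^k"
    by (intro mult_right_mono mult_left_mono IH') auto
  also have "\<dots> = (real n + 1)^2 * lam^n * ((real k + 1)^k * real n^n)" by (simp add: ac_simps)
  also have "\<dots> \<le> (real n + 1)^2 * lam^n * ((real n + 1)^n * real k^k)"
    by (intro mult_left_mono EM) (use lp in auto)
  also have "\<dots> = ((real n + 1)^(Suc n) * lam^n * real k^k) * (real n + 1)"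
    by (simp add: power2_eq_square ac_simps)
  also have "\<dots> \<le> ((real n + 1)^(Suc n) * lam^n * real k^k) * (lam * (real k + 1))"
    by (intro mult_left_mono cond) (use lp in auto)
  also have "\<dots> = ((real n + 1)^(Suc n) * lam^(Suc n)) * ((real k + 1) * real k^k)"
    by (simp add: ac_simps)
  finally have "(C'^2 * (real k + 1)^(Suc k)) * ((real k + 1) * real k^k) \<le> ((real n + 1)^(Suc n) * lam^(Suc n)) * ((real k + 1) * real k^k)" .
  moreover have "(real k + 1) * real k^k > 0" using k1 by simp
  ultimately have "C'^2 * (real k + 1)^(Suc k) \<le> (real n + 1)^(Suc n) * lam^(Suc n)"
    by (rule mult_right_le_imp_le)
  thus ?thesis unfolding G_def C'_def by (simp add: add.commute)
qed

lemma G_from_base: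
  assumes m1: "1 \<le> m" and bm: "22 * m \<le> 3 * (b + 1)" and base: "G b (b - m)"
  shows "b \<le> n \<Longrightarrow> G n (n - m)"
proof (induction n rule: dec_induct)
  case base show ?case by fact
next
  case (step n)
  have nm: "22 * m \<le> 3 * (n + 1)" using bm step(1) by presburger
  have k1: "1 \<le> n - m" and kn: "n - m \<le> n" using nm m1 by auto
  have "real n + 1 \<le> 22/19 * (real (n - m) + 1)" using nm k1 by (simp add: of_nat_diff field_simps)
  also have "\<dots> \<le> lam * (real (n - m) + 1)" by (intro mult_right_mono lam_ge') auto
  finally have cond: "real n + 1 \<le> lam * (real (n - m) + 1)" .
  have "G (Suc n) (Suc (n - m))" by (rule G_step[OF k1 kn cond step.IH])
  moreover have "Suc (n - m) = Suc n - m" using k1 by simp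
  ultimately show ?case by simp
qed

lemma G_of_check:
  assumes mn: "m \<le> n" and D: "D > 0" and CP: "(n choose m) * D \<le> P"
    and chk: "P^2 * (n-m)^(n-m) * 19^n \<le> D^2 * n^n * (22::nat)^n"
  shows "G n (n - m)"
proof -
  have Cm: "n choose (n - m) = n choose m" using mn by (metis binomial_symmetric diff_diff_cancel diff_le_self)
  define C where "C = real (n choose m)"
  have CP': "C * real D \<le> real P" using CP unfolding C_def by (metis of_nat_le_iff of_nat_mult)
  have chk': "real P^2 * real (n-m)^(n-m) * 19^n \<le> real D^2 * real n^n * 22^n"
  proof -
    have "real (P^2 * (n-m)^(n-m) * 19^n) \<le> real (D^2 * n^n * (22::nat)^n)" using chk by (simp only: of_nat_le_iff)
    thus ?thesis by simp
  qed
  have C0: "C \<ge> 0" unfolding C_def by simp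
  have "(C * real D)^2 * real (n-m)^(n-m) * 19^n \<le> real P^2 * real (n-m)^(n-m) * 19^n"
    by (intro mult_right_mono power_mono CP') (use C0 D in auto)
  also note chk'
  finally have "(C^2 * real (n-m)^(n-m)) * (real D^2 * 19^n) \<le> (real n^n * 22^n) * real D^2"
    by (simp add: power_mult_distrib ac_simps)
  hence "C^2 * real (n-m)^(n-m) * (real D^2 * 19^n) \<le> (real n^n * (22/19)^n) * (real D^2 * 19^n)"
    by (simp add: power_divide ac_simps)
  moreover have "real D^2 * 19^n > 0" using D by simp
  ultimately have "C^2 * real (n-m)^(n-m) \<le> real n^n * (22/19)^n" by (rule mult_right_le_imp_le)
  also have "\<dots> \<le> real n^n * lam^n" by (intro mult_left_mono power_mono lam_ge') auto
  finally show ?thesis unfolding G_def Cm C_def .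
qed

lemma chk1: "\<forall>n\<in>set [4..<8]. n \<noteq> 6 \<longrightarrow> n^2 * (n-1)^(n-1) * 19^n \<le> 1 * n^n * (22::nat)^n"
  by (simp add: upt_rec)
lemma chk2: "\<forall>n\<in>set [4..<15]. (n*(n-1))^2 * (n-2)^(n-2) * 19^n \<le> 2^2 * n^n * (22::nat)^n"
  by (simp add: upt_rec)
lemma chk3: "\<forall>n\<in>set [4..<23]. (n^3)^2 * (n-3)^(n-3) * 19^n \<le> 6^2 * n^n * (22::nat)^n"
  by (simp add: upt_rec)
lemma chk4: "\<forall>n\<in>set [4..<30]. (n^4)^2 * (n-4)^(n-4) * 19^n \<le> 24^2 * n^n * (22::nat)^n"
  by (simp add: upt_rec)
lemma chk5: "\<forall>n\<in>set [5..<37]. (n^5)^2 * (n-5)^(n-5) * 19^n \<le> 120^2 * n^n * (22::nat)^n"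
  by (simp add: upt_rec)
lemma chk6: "\<forall>n\<in>set [6..<45]. (n^6)^2 * (n-6)^(n-6) * 19^n \<le> 720^2 * n^n * (22::nat)^n"
  by (simp add: upt_rec)

lemma G_65: "G 6 5"
proof -
  have c: "(6::nat) choose 5 = 6 choose 1" using binomial_symmetric[of 1 6] by simp
  have "(112500::real) \<le> 46656 * (231599437 / 200000000)^6" by (simp add: power_divide)
  also have "\<dots> \<le> 46656 * lam^6" by (intro mult_left_mono power_mono lam_ge) auto
  finally show ?thesis unfolding G_def c by simp
qed

lemma G_fin:
  assumes "1 \<le> m" "m \<le> 6" "4 \<le> n" "m \<le> n" "3 * n \<le> 22 * m"
  shows "G n (n - m)"
proof -
  have fm: "(n choose m) * fact m \<le> n^m" by (rule binomial_fact_pow)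
  consider "m = 1" | "m = 2" | "m = 3" | "m = 4" | "m = 5" | "m = 6" using assms(1,2) by linarith
  thus ?thesis
  proof cases
    case 1
    show ?thesis
    proof (cases "n = 6")
      case True thus ?thesis using 1 G_65 by simp
    next
      case False
      have "n < 8" using assms 1 by linarith
      hence mem: "n \<in> set [4..<8]" unfolding set_upt using assms(3) by simp
      have "n^2 * (n-1)^(n-1) * 19^n \<le> 1^2 * n^n * (22::nat)^n" using chk1[rule_format, OF mem] False by simp
      thus ?thesis using 1 assms by (intro G_of_check[of m n 1 n]) auto
    qed
  next
    case 2
    have "n < 15" using assms 2 by linarith
    hence mem: "n \<in> set [4..<15]" unfolding set_upt using assms(3,4) 2 by simp
    have c: "(n*(n-1))^2 * (n-2)^(n-2) * 19^n \<le> 2^2 * n^n * (22::nat)^n" using chk2[rule_format, OF mem] by simp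
    have "Suc 1 * (n choose Suc 1) = n * ((n - 1) choose 1)" by (rule binomial_absorption)
    hence "(n choose 2) * 2 \<le> n * (n - 1)" by (simp add: numeral_2_eq_2 mult.commute)
    thus ?thesis using 2 assms c by (intro G_of_check[of m n 2 "n*(n-1)"]) auto
  next
    case 3
    have "n < 23" using assms 3 by linarith
    hence mem: "n \<in> set [4..<23]" unfolding set_upt using assms(3,4) 3 by simp
    have c: "(n^3)^2 * (n-3)^(n-3) * 19^n \<le> 6^2 * n^n * (22::nat)^n" using chk3[rule_format, OF mem] by simp
    have "fact 3 = (6::nat)" by (simp add: fact_numeral)
    thus ?thesis using 3 assms c fm by (intro G_of_check[of m n 6 "n^3"]) auto
  next
    case 4
    have "n < 30" using assms 4 by linarith
    hence mem: "n \<in> set [4..<30]" unfolding set_upt using assms(3,4) 4 by simp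
    have c: "(n^4)^2 * (n-4)^(n-4) * 19^n \<le> 24^2 * n^n * (22::nat)^n" using chk4[rule_format, OF mem] by simp
    have "fact 4 = (24::nat)" by (simp add: fact_numeral)
    thus ?thesis using 4 assms c fm by (intro G_of_check[of m n 24 "n^4"]) auto
  next
    case 5
    have "n < 37" using assms 5 by linarith
    hence mem: "n \<in> set [5..<37]" unfolding set_upt using assms(3,4) 5 by simp
    have c: "(n^5)^2 * (n-5)^(n-5) * 19^n \<le> 120^2 * n^n * (22::nat)^n" using chk5[rule_format, OF mem] by simp
    have "fact 5 = (120::nat)" by (simp add: fact_numeral)
    thus ?thesis using 5 assms c fm by (intro G_of_check[of m n 120 "n^5"]) auto
  next
    case 6
    have "n < 45" using assms 6 by linarith
    hence mem: "n \<in> set [6..<45]" unfolding set_upt using assms(3,4) 6 by simp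
    have c: "(n^6)^2 * (n-6)^(n-6) * 19^n \<le> 720^2 * n^n * (22::nat)^n" using chk6[rule_format, OF mem] by simp
    have "fact 6 = (720::nat)" by (simp add: fact_numeral)
    thus ?thesis using 6 assms c fm by (intro G_of_check[of m n 720 "n^6"]) auto
  qed
qed

lemma G_all:
  assumes n4: "4 \<le> n" and kn: "k \<le> n"
  shows "G n k"
proof -
  define m where "m = n - k"
  have k: "k = n - m" unfolding m_def using kn by simp
  consider "m = 0" | "1 \<le> m" "m \<le> 6" | "7 \<le> m" by linarith
  thus ?thesis
  proof cases
    case 1
    hence "k = n" using k by simp
    moreover have "real n^n * 1 \<le> real n^n * lam^n" by (intro mult_left_mono one_le_power lam_ge1) auto
    ultimately show ?thesis unfolding G_def by simp
  next
    case 2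
    have mn: "m \<le> n" unfolding m_def by simp
    show ?thesis
    proof (cases "3 * n \<le> 22 * m")
      case True
      thus ?thesis unfolding k by (intro G_fin) (use 2 n4 mn in auto)
    next
      case False
      define b where "b = (22 * m) div 3"
      have b1: "3 * b \<le> 22 * m" "22 * m \<le> 3 * (b + 1)" unfolding b_def by auto
      have bn: "b \<le> n" using b1 False by linarith
      have "G b (b - m)" by (rule G_fin) (use 2 b1 in auto)
      from G_from_base[OF 2(1) b1(2) this bn] show ?thesis unfolding k .
    qed
  next
    case 3
    thus ?thesis by (intro G_big) (use kn in \<open>auto simp: m_def\<close>)
  qed
qed


theorem lemma1:
  fixes n :: nat and A :: "complex mat" and B :: real
  assumes "n \<ge> 4"
    and "A \<in> carrier_mat n n"
    and "B > 1"
    and "\<And>i j. i < n \<Longrightarrow> j < n \<Longrightarrow> cmod (A $$ (i, j)) \<le> B"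
  shows "log 2 (poly_inf_norm (char_poly A))
           \<le> real n / 2 * (log 2 (real n) + log 2 (B\<^sup>2) + 0.21163175)"
proof -
  note n4 = assms(1) and Ac = assms(2) and B1 = assms(3) and ent = assms(4)
  define P where "P = char_poly A"
  have dP: "degree P = n" and cP: "coeff P n = 1" using degree_monic_char_poly[OF Ac] unfolding P_def by auto
  have B0: "B \<ge> 0" using B1 by simp
  define X where "X = real n ^ n * lam ^ n"
  define R where "R = sqrt X * B ^ n"
  have X0: "X > 0" unfolding X_def using n4 lam_pos by simp
  have bnd: "cmod (coeff P j) \<le> R" if j: "j \<le> n" for j
  proof -
    define k where "k = n - j"
    have kn: "k \<le> n" unfolding k_def by simp
    have Cjk: "n choose j = n choose k" unfolding k_def using j by (rule binomial_symmetric)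
    have "cmod (coeff P j) \<le> real (n choose j) * sqrt (real (n - j) ^ (n - j)) * B ^ (n - j)"
      unfolding P_def by (rule coeff_char_poly_bound[OF B0 Ac ent])
    also have "\<dots> = sqrt (real (n choose k)^2 * real k ^ k) * B ^ (n - j)"
      unfolding Cjk k_def[symmetric] by (simp add: real_sqrt_mult)
    also have "\<dots> \<le> sqrt X * B ^ n"
    proof (intro mult_mono)
      show "sqrt (real (n choose k)^2 * real k ^ k) \<le> sqrt X"
        using G_all[OF n4 kn] unfolding G_def X_def by simp
      show "B ^ (n - j) \<le> B ^ n" by (rule power_increasing) (use B1 in auto)
    qed (use B0 X0 in auto)
    finally show ?thesis unfolding R_def .
  qed
  have fin: "finite ((\<lambda>j. cmod (coeff P j)) ` {0..degree P})" by simp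
  have ne: "(\<lambda>j. cmod (coeff P j)) ` {0..degree P} \<noteq> {}" by simp
  have le: "poly_inf_norm P \<le> R"
    unfolding poly_inf_norm_def using bnd dP by (subst Max_le_iff[OF fin ne]) auto
  have ge: "1 \<le> poly_inf_norm P"
  proof -
    have "cmod (coeff P n) \<le> poly_inf_norm P"
      unfolding poly_inf_norm_def by (rule Max_ge[OF fin]) (use dP in auto)
    thus ?thesis using cP by simp
  qed
  have "log 2 (poly_inf_norm P) \<le> log 2 R"
    using ge le by (subst log_le_cancel_iff) auto
  also have "log 2 R = log 2 X / 2 + real n * log 2 B"
  proof -
    have "log 2 R = log 2 (sqrt X) + log 2 (B ^ n)" unfolding R_def
      using X0 B1 by (subst log_mult) auto
    also have "log 2 (sqrt X) = log 2 X / 2"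
      using X0 by (simp add: sqrt_def log_root)
    also have "log 2 (B ^ n) = real n * log 2 B" using B1 by (simp add: log_nat_power)
    finally show ?thesis .
  qed
  also have "log 2 X = real n * log 2 (real n) + real n * (21163175 / 100000000)"
  proof -
    have "log 2 X = log 2 (real n ^ n) + log 2 (lam ^ n)" unfolding X_def
      using n4 lam_pos by (subst log_mult) auto
    also have "\<dots> = real n * log 2 (real n) + real n * log 2 lam"
      using n4 lam_pos by (simp add: log_nat_power)
    also have "log 2 lam = 21163175 / 100000000" unfolding lam_def by simp
    finally show ?thesis .
  qed
  also have "(real n * log 2 (real n) + real n * (21163175 / 100000000)) / 2 + real n * log 2 B
      = real n / 2 * (log 2 (real n) + log 2 (B\<^sup>2) + 0.21163175)"
    using B1 by (simp add: log_nat_power field_simps)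
  finally show ?thesis unfolding P_def .
qed

end
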